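(* For $|q|<1$, \begin{align*} \phi(q)+\sum_{r=1}^{\infty}(-1;q^2)_rq^r&=\sum_{n=-\infty}^{\infty}\frac{q^{n^2}}{(-q^2;q^2)_n}=\frac{(-q,-q,q^2;q^2)_{\infty}}{(q,-q^2;q^2)_{\infty}},\\ \nu(q)+\sum_{r=0}^{\infty}(-q;q^2)_rq^r&=\sum_{n=-\infty}^{\infty}\frac{q^{n^2+n}}{(-q;q^2)_{n+1}}=2(-q^2,-q^2;q^2)_{\infty}(q^4;q^4)_{\infty},\\ \psi(q)+\sum_{r=0}^{\infty}(q;q^2)_r(-1)^r&=\sum_{n=-\infty}^{\infty}\frac{q^{n^2}}{(q;q^2)_n}=\frac{(-q,-q,q^2;q^2)_{\infty}}{2(q,-q^2;q^2)_{\infty}}, \end{align*} where in the third identity the series $\sum_{r\ge0}(q;q^2)_r(-1)^r$ (equivalently the part of the bilateral series with negative index) is summed in the Cesàro sense.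
   Context: For $n\ge 0$, $(a;q)_n=\prod_{j=0}^{n-1}(1-aq^j)$, $(a;q)_\infty=\prod_{j\ge0}(1-aq^j)$, and for negative index $(a;q)_{-n}=1/(aq^{-n};q)_n$. Also $(a_1,\dots,a_k;q)_n=(a_1;q)_n\cdots(a_k;q)_n$ (same for $n=\infty$). Third order mock theta functions: $\phi(q)=\sum_{n\ge0}\frac{q^{n^2}}{(-q^2;q^2)_n}$, $\psi(q)=\sum_{n\ge1}\frac{q^{n^2}}{(q;q^2)_n}$, $\nu(q)=\sum_{n\ge0}\frac{q^{n^2+n}}{(-q;q^2)_{n+1}}$. *)

theory Defs
  imports "HOL-Analysis.Analysis"
begin

definition qpoch :: "complex \<Rightarrow> complex \<Rightarrow> nat \<Rightarrow> complex" where
  "qpoch a b n = (\<Prod>j<n. (1 - a * b ^ j))"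

definition qpochZ :: "complex \<Rightarrow> complex \<Rightarrow> int \<Rightarrow> complex" where
  "qpochZ a b n = (if 0 \<le> n then qpoch a b (nat n)
                   else 1 / qpoch (a * b powi n) b (nat (- n)))"

definition qinf :: "complex \<Rightarrow> complex \<Rightarrow> complex" where
  "qinf a b = (\<Prod>j. (1 - a * b ^ j))"

definition mock_phi :: "complex \<Rightarrow> complex" where
  "mock_phi q = (\<Sum>n. q ^ (n^2) / qpoch (- (q^2)) (q^2) n)"

definition mock_psi :: "complex \<Rightarrow> complex" where
  "mock_psi q = (\<Sum>n. q ^ ((Suc n)^2) / qpoch q (q^2) (Suc n))"

definition mock_nu :: "complex \<Rightarrow> complex" where
  "mock_nu q = (\<Sum>n. q ^ (n^2 + n) / qpoch (- q) (q^2) (Suc n))"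

definition cesaro_sums :: "(nat \<Rightarrow> complex) \<Rightarrow> complex \<Rightarrow> bool" where
  "cesaro_sums f s \<longleftrightarrow>
     (\<lambda>N. (\<Sum>n\<le>N. \<Sum>k\<le>n. f k) / of_nat (Suc N)) \<longlonglongrightarrow> s"

end

theory Submission
  imports Defs
begin


lemma qpoch_Suc: "qpoch a b (Suc n) = qpoch a b n * (1 - a * b ^ n)"
  by (simp add: qpoch_def)

lemma qpoch_Suc': "qpoch a b (Suc n) = (1 - a) * qpoch (a * b) b n"
  unfolding qpoch_def by (subst prod.lessThan_Suc_shift) (simp add: mult.assoc)

lemma qpoch_0 [simp]: "qpoch a b 0 = 1"
  by (simp add: qpoch_def)

lemma qinf_conv:
  fixes a p :: complex
  assumes "norm p < 1"
  shows "convergent_prod (\<lambda>j. 1 - a * p ^ j)"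
proof -
  have "summable (\<lambda>j. norm a * norm p ^ j)"
    using assms by (intro summable_mult summable_geometric) auto
  moreover have "(\<lambda>j. norm ((1 - a * p ^ j) - 1)) = (\<lambda>j. norm a * norm p ^ j)"
    proof (rule ext) fix j show "norm ((1 - a * p ^ j) - 1) = norm a * norm p ^ j" by (simp add: norm_minus_commute norm_mult norm_power) qed
  ultimately have "summable (\<lambda>j. norm ((1 - a * p ^ j) - 1))" by simp
  thus ?thesis
    by (intro abs_convergent_prod_imp_convergent_prod summable_imp_abs_convergent_prod)
qed

lemma qinf_has_prod:
  assumes "norm p < 1"
  shows "(\<lambda>j. 1 - a * p ^ j) has_prod qinf a p"
  unfolding qinf_def using qinf_conv[OF assms] by (simp add: convergent_prod_has_prod)

lemma qinf_split:
  assumes "norm p < 1"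
  shows "qinf a p = qpoch a p n * qinf (a * p ^ n) p"
proof -
  have "(\<lambda>j. 1 - a * p ^ j) has_prod ((\<Prod>k<n. 1 - a * p ^ k) * (\<Prod>k. 1 - a * p ^ (k + n)))"
    by (rule has_prod_ignore_initial_segment'[OF qinf_conv[OF assms]])
  hence "qinf a p = (\<Prod>k<n. 1 - a * p ^ k) * (\<Prod>k. 1 - a * p ^ (k + n))"
    using qinf_has_prod[OF assms] has_prod_unique2 by blast
  also have "(\<Prod>k. 1 - a * p ^ (k + n)) = qinf (a * p ^ n) p"
    unfolding qinf_def by (simp add: power_add mult_ac)
  finally show ?thesis by (simp add: qpoch_def)
qed

lemma qinf_Suc:
  assumes "norm p < 1"
  shows "qinf a p = (1 - a) * qinf (a * p) p"
  using qinf_split[OF assms, of a 1] by (simp add: qpoch_def)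

lemma qinf_nz:
  assumes "norm p < 1" "\<And>j. a * p ^ j \<noteq> 1"
  shows "qinf a p \<noteq> 0"
proof
  assume "qinf a p = 0"
  hence "0 \<in> range (\<lambda>j. 1 - a * p ^ j)"
    using has_prod_eq_0_iff[OF qinf_has_prod[OF assms(1)]] by simp
  then obtain j where "1 - a * p ^ j = 0" by auto
  with assms(2)[of j] show False by simp
qed

lemma qinf_zero:
  assumes "norm p < 1" "a * p ^ j = 1"
  shows "qinf a p = 0"
  using has_prod_zeroI[OF qinf_has_prod[OF assms(1)], where n=j] assms(2) by simp

lemma qpoch_tendsto:
  assumes "norm p < 1"
  shows "(\<lambda>n. qpoch a p n) \<longlonglongrightarrow> qinf a p"
  unfolding qpoch_def using has_prod_imp_tendsto'[OF qinf_has_prod[OF assms]] .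

lemma qpoch_nz:
  assumes "\<And>j. j < n \<Longrightarrow> a * p ^ j \<noteq> 1"
  shows "qpoch a p n \<noteq> 0"
  unfolding qpoch_def using assms by (auto simp: prod_zero_iff)

lemma pow_ne_1:
  fixes p :: complex
  assumes "norm p < 1" "norm a \<le> 1" "0 < j"
  shows "a * p ^ j \<noteq> 1"
proof
  assume "a * p ^ j = 1"
  hence "norm a * norm p ^ j = 1" by (metis norm_mult norm_one norm_power)
  moreover have "norm p ^ j < 1" using assms by (simp add: power_less_one_iff)
  moreover have "norm p ^ j \<ge> 0" by simp
  ultimately show False using assms(2)
    by (smt (verit, ccfv_SIG) mult_left_le_one_le norm_ge_zero)
qed

lemma qpoch_pp_nz:
  fixes p :: complex
  assumes "norm p < 1"
  shows "qpoch p p k \<noteq> 0"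
proof (rule qpoch_nz)
  fix j have "1 * p ^ Suc j \<noteq> 1" by (rule pow_ne_1) (use assms in auto)
  thus "p * p ^ j \<noteq> 1" by simp
qed

lemma ratio_summable:
  fixes f :: "nat \<Rightarrow> 'a::banach"
  assumes le: "\<And>n. norm (f (Suc n)) \<le> r n * norm (f n)"
    and lim: "r \<longlonglongrightarrow> L" and L: "L < 1"
  shows "summable (\<lambda>n. norm (f n))"
proof -
  define c where "c = (L + 1) / 2"
  have "c < 1" "L < c" using L by (auto simp: c_def)
  then have "eventually (\<lambda>n. r n < c) sequentially"
    using lim order_tendstoD(2) by blast
  then obtain N where N: "\<And>n. n \<ge> N \<Longrightarrow> r n < c"
    by (auto simp: eventually_sequentially)
  show ?thesis
  proof (rule summable_ratio_test[OF \<open>c < 1\<close>, of N])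
    fix n assume "n \<ge> N"
    have "norm (f (Suc n)) \<le> r n * norm (f n)" by (rule le)
    also have "\<dots> \<le> c * norm (f n)"
      using N[OF \<open>n \<ge> N\<close>] by (intro mult_right_mono) auto
    finally show "norm (norm (f (Suc n))) \<le> c * norm (norm (f n))" by simp
  qed
qed

definition tri :: "nat \<Rightarrow> nat" where "tri k = k * (k - 1) div 2"

lemma tri_Suc: "tri (Suc k) = tri k + k"
proof -
  have "Suc k * k = k * (k - 1) + 2 * k" by (cases k) (auto simp: algebra_simps)
  thus ?thesis unfolding tri_def by simp
qed

lemma tri_0 [simp]: "tri 0 = 0" by (simp add: tri_def)

definition ec :: "complex \<Rightarrow> nat \<Rightarrow> complex" where
  "ec p k = (-1) ^ k * p ^ tri k / qpoch p p k"

definition fc :: "complex \<Rightarrow> nat \<Rightarrow> complex" where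
  "fc p k = 1 / qpoch p p k"

lemma norm_1_minus_pow:
  fixes p :: complex assumes "norm p < 1"
  shows "norm (1 - p ^ Suc k) \<ge> 1 - norm p ^ Suc k" "1 - norm p ^ Suc k \<ge> 1 - norm p"
    "1 - norm p ^ Suc k > 0"
proof -
  have "norm (1::complex) - norm (p ^ Suc k) \<le> norm (1 - p ^ Suc k)" by (rule norm_triangle_ineq2)
  thus "norm (1 - p ^ Suc k) \<ge> 1 - norm p ^ Suc k" by (simp only: norm_one norm_power)
  have "norm p ^ Suc k \<le> norm p" using assms by (simp add: power_le_one mult_left_le)
  thus "1 - norm p ^ Suc k \<ge> 1 - norm p" by simp
  have "norm p ^ Suc k < 1" using assms \<open>norm p ^ Suc k \<le> norm p\<close> by linarith
  thus "1 - norm p ^ Suc k > 0" by simp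
qed

lemma ec_Suc:
  fixes p :: complex assumes "norm p < 1"
  shows "ec p (Suc k) = - (p ^ k * ec p k) / (1 - p ^ Suc k)"
proof -
  have nz: "qpoch p p k \<noteq> 0" "1 - p ^ Suc k \<noteq> 0"
    using qpoch_pp_nz[OF assms] pow_ne_1[OF assms, of 1 "Suc k"] by auto
  show ?thesis unfolding ec_def qpoch_Suc tri_Suc
    using nz by (simp add: field_simps power_add)
qed

lemma fc_Suc:
  fixes p :: complex assumes "norm p < 1"
  shows "fc p (Suc k) = fc p k / (1 - p ^ Suc k)"
  unfolding fc_def qpoch_Suc by simp

lemma E1_summable:
  fixes p z :: complex assumes p: "norm p < 1"
  shows "summable (\<lambda>k. norm (ec p k * z ^ k))"
proof (rule ratio_summable)
  fix n
  have d: "1 - norm p > 0" using p by simp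
  have "norm (ec p (Suc n) * z ^ Suc n) = norm p ^ n * norm z * norm (ec p n * z ^ n) / norm (1 - p ^ Suc n)"
    by (simp add: ec_Suc[OF p] norm_mult norm_divide norm_power)
  also have "\<dots> \<le> norm p ^ n * norm z * norm (ec p n * z ^ n) / (1 - norm p)"
  proof (rule divide_left_mono)
    show "norm (1 - p ^ Suc n) \<ge> 1 - norm p" using norm_1_minus_pow[OF p, of n] by linarith
    show "0 < norm (1 - p ^ Suc n) * (1 - norm p)" using norm_1_minus_pow[OF p, of n] d
      by (intro mult_pos_pos) linarith+
  qed simp
  finally show "norm (ec p (Suc n) * z ^ Suc n) \<le> (norm p ^ n * norm z / (1 - norm p)) * norm (ec p n * z ^ n)"
    by simp
next
  show "(\<lambda>n. norm p ^ n * norm z / (1 - norm p)) \<longlonglongrightarrow> 0 * norm z / (1 - norm p)"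
    using p by (intro tendsto_intros LIMSEQ_power_zero) auto
qed simp

lemma E2_summable:
  fixes p w :: complex assumes p: "norm p < 1" and w: "norm w < 1"
  shows "summable (\<lambda>k. norm (fc p k * w ^ k))"
proof (rule ratio_summable)
  fix n
  have "norm (fc p (Suc n) * w ^ Suc n) = norm w * norm (fc p n * w ^ n) / norm (1 - p ^ Suc n)"
    by (simp add: fc_Suc[OF p] norm_mult norm_divide norm_power)
  also have "\<dots> \<le> norm w * norm (fc p n * w ^ n) / (1 - norm p ^ Suc n)"
  proof (rule divide_left_mono)
    show "norm (1 - p ^ Suc n) \<ge> 1 - norm p ^ Suc n" using norm_1_minus_pow[OF p, of n] by linarith
    show "0 < norm (1 - p ^ Suc n) * (1 - norm p ^ Suc n)" using norm_1_minus_pow[OF p, of n]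
      by (intro mult_pos_pos) linarith+
  qed simp
  finally show "norm (fc p (Suc n) * w ^ Suc n) \<le> (norm w / (1 - norm p ^ Suc n)) * norm (fc p n * w ^ n)"
    by simp
next
  have "(\<lambda>n. norm p * norm p ^ n) \<longlonglongrightarrow> norm p * 0"
    using p by (intro tendsto_intros LIMSEQ_power_zero) auto
  hence "(\<lambda>n. norm p ^ Suc n) \<longlonglongrightarrow> 0" by simp
  thus "(\<lambda>n. norm w / (1 - norm p ^ Suc n)) \<longlonglongrightarrow> norm w / (1 - 0)"
    by (intro tendsto_intros) auto
qed (use w in simp)

lemma E1_fun_eq:
  fixes p z :: complex assumes p: "norm p < 1"
  shows "(\<Sum>k. ec p k * z ^ k) = (1 - z) * (\<Sum>k. ec p k * (p * z) ^ k)"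
proof -
  define H where "H = (\<lambda>z. \<Sum>k. ec p k * z ^ k)"
  have sH: "(\<lambda>k. ec p k * w ^ k) sums H w" for w
    unfolding H_def by (rule summable_sums, rule summable_norm_cancel, rule E1_summable[OF p])
  have "(\<lambda>k. ec p k * z ^ k - ec p k * (p * z) ^ k) sums (H z - H (p * z))"
    by (intro sums_diff sH)
  moreover have "(\<lambda>k. ec p k * z ^ k - ec p k * (p * z) ^ k) sums (- z * H (p * z))"
  proof -
    have "(\<lambda>j. - z * (ec p j * (p * z) ^ j)) sums (- z * H (p * z))"
      by (intro sums_mult sH)
    moreover have "- z * (ec p j * (p * z) ^ j) = ec p (Suc j) * z ^ Suc j - ec p (Suc j) * (p * z) ^ Suc j" for j
    proof -
      have nz: "1 - p ^ Suc j \<noteq> 0" using pow_ne_1[OF p, of 1 "Suc j"] by auto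
      have e: "ec p (Suc j) * (1 - p ^ Suc j) = - (p ^ j * ec p j)" using nz by (simp add: ec_Suc[OF p])
      have "ec p (Suc j) * z ^ Suc j - ec p (Suc j) * (p * z) ^ Suc j = (ec p (Suc j) * (1 - p ^ Suc j)) * z ^ Suc j"
        by (simp add: power_mult_distrib algebra_simps)
      also have "\<dots> = - z * (ec p j * (p * z) ^ j)" unfolding e by (simp add: power_mult_distrib algebra_simps)
      finally show ?thesis by simp
    qed
    ultimately have "(\<lambda>j. ec p (Suc j) * z ^ Suc j - ec p (Suc j) * (p * z) ^ Suc j) sums (- z * H (p * z))"
      by simp
    thus ?thesis by (subst (asm) sums_Suc_iff) simp
  qed
  ultimately have "H z - H (p * z) = - z * H (p * z)" by (rule sums_unique2)
  hence "H z = (1 - z) * H (p * z)" by (simp add: algebra_simps)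
  thus ?thesis by (simp add: H_def)
qed

lemma E1:
  fixes p z :: complex assumes p: "norm p < 1"
  shows "(\<lambda>k. ec p k * z ^ k) sums qinf z p"
proof -
  define H where "H = (\<lambda>z. \<Sum>k. ec p k * z ^ k)"
  have it: "H w = qpoch w p n * H (p ^ n * w)" for n w
  proof (induction n arbitrary: w)
    case 0 thus ?case by simp
  next
    case (Suc n)
    have "H w = (1 - w) * H (p * w)" unfolding H_def by (rule E1_fun_eq[OF p])
    also have "H (p * w) = qpoch (p * w) p n * H (p ^ n * (p * w))" by (rule Suc)
    finally show ?case by (simp add: qpoch_Suc' mult_ac)
  qed
  have cont: "isCont H 0" unfolding H_def
    by (rule isCont_powser_converges_everywhere, rule summable_norm_cancel, rule E1_summable[OF p])
  have H0: "H 0 = 1" unfolding H_def powser_zero by (simp add: ec_def tri_def)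
  have "(\<lambda>n. p ^ n * z) \<longlonglongrightarrow> 0 * z" using p by (intro tendsto_intros LIMSEQ_power_zero) auto
  hence "(\<lambda>n. H (p ^ n * z)) \<longlonglongrightarrow> H 0" using cont isCont_tendsto_compose by auto
  hence "(\<lambda>n. qpoch z p n * H (p ^ n * z)) \<longlonglongrightarrow> qinf z p * 1"
    using H0 by (intro tendsto_intros qpoch_tendsto[OF p]) auto
  hence "(\<lambda>n. H z) \<longlonglongrightarrow> qinf z p" using it[of z] by simp
  hence "H z = qinf z p" by (simp add: LIMSEQ_const_iff)
  thus ?thesis unfolding H_def[symmetric]
    by (metis E1_summable H_def p summable_norm_cancel summable_sums)
qed

lemma E2:
  fixes p w :: complex assumes p: "norm p < 1" and w: "norm w < 1"
  shows "(\<lambda>k. fc p k * w ^ k) sums (1 / qinf w p)" "qinf w p \<noteq> 0"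
proof -
  define G where "G = (\<lambda>z. \<Sum>k. fc p k * z ^ k)"
  have sG: "norm u < 1 \<Longrightarrow> (\<lambda>k. fc p k * u ^ k) sums G u" for u
    unfolding G_def by (rule summable_sums, rule summable_norm_cancel, rule E2_summable[OF p])
  have fe: "G (p * u) = (1 - u) * G u" if u: "norm u < 1" for u
  proof -
    have "norm p * norm u \<le> norm u" using p by (intro mult_left_le_one_le) auto
    hence pu: "norm (p * u) < 1" using u by (simp add: norm_mult)
    have "(\<lambda>k. fc p k * u ^ k - fc p k * (p * u) ^ k) sums (G u - G (p * u))"
      by (intro sums_diff sG u pu)
    moreover have "(\<lambda>k. fc p k * u ^ k - fc p k * (p * u) ^ k) sums (u * G u)"
    proof -
      have "(\<lambda>j. u * (fc p j * u ^ j)) sums (u * G u)"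
        by (intro sums_mult sG u)
      moreover have "u * (fc p j * u ^ j) = fc p (Suc j) * u ^ Suc j - fc p (Suc j) * (p * u) ^ Suc j" for j
      proof -
        have nz: "1 - p ^ Suc j \<noteq> 0" using pow_ne_1[OF p, of 1 "Suc j"] by auto
        have e: "fc p (Suc j) * (1 - p ^ Suc j) = fc p j" using nz by (simp add: fc_Suc[OF p])
        have "fc p (Suc j) * u ^ Suc j - fc p (Suc j) * (p * u) ^ Suc j = (fc p (Suc j) * (1 - p ^ Suc j)) * u ^ Suc j"
          by (simp add: power_mult_distrib algebra_simps)
        also have "\<dots> = u * (fc p j * u ^ j)" unfolding e by (simp add: power_mult_distrib algebra_simps)
        finally show ?thesis by simp
      qed
      ultimately have "(\<lambda>j. fc p (Suc j) * u ^ Suc j - fc p (Suc j) * (p * u) ^ Suc j) sums (u * G u)"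
        by simp
      thus ?thesis by (subst (asm) sums_Suc_iff) simp
    qed
    ultimately have "G u - G (p * u) = u * G u" by (rule sums_unique2)
    thus ?thesis by (simp add: algebra_simps)
  qed
  have pn: "norm (p ^ n * u) < 1" if "norm u < 1" for n u
  proof -
    have "norm (p ^ n) \<le> 1" using p by (simp add: norm_power power_le_one)
    hence "norm (p ^ n) * norm u \<le> norm u" by (intro mult_left_le_one_le) auto
    thus ?thesis using that by (simp add: norm_mult del: norm_power)
  qed
  have it: "G (p ^ n * u) = qpoch u p n * G u" if "norm u < 1" for n u
    using that
  proof (induction n arbitrary: u)
    case 0 thus ?case by simp
  next
    case (Suc n)
    have pu: "norm (p * u) < 1" using pn[OF Suc.prems, of 1] by simp
    have "G (p ^ Suc n * u) = G (p ^ n * (p * u))" by (simp add: mult_ac)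
    also have "\<dots> = qpoch (p * u) p n * G (p * u)" by (rule Suc.IH[OF pu])
    also have "\<dots> = qpoch (p * u) p n * ((1 - u) * G u)" by (simp add: fe Suc.prems)
    finally show ?case by (simp add: qpoch_Suc' mult_ac)
  qed
  have cont: "isCont G 0" unfolding G_def
  proof (rule isCont_powser)
    show "summable (\<lambda>n. fc p n * (1/2) ^ n)"
      by (rule summable_norm_cancel, rule E2_summable[OF p]) simp
  qed simp
  have G0: "G 0 = 1" unfolding G_def powser_zero by (simp add: fc_def)
  have "(\<lambda>n. p ^ n * w) \<longlonglongrightarrow> 0 * w" using p by (intro tendsto_intros LIMSEQ_power_zero) auto
  hence "(\<lambda>n. G (p ^ n * w)) \<longlonglongrightarrow> G 0" using cont isCont_tendsto_compose by auto
  moreover have "(\<lambda>n. qpoch w p n * G w) \<longlonglongrightarrow> qinf w p * G w"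
    by (intro tendsto_intros qpoch_tendsto[OF p])
  ultimately have "(\<lambda>n. qpoch w p n * G w) \<longlonglongrightarrow> G 0" "(\<lambda>n. qpoch w p n * G w) \<longlonglongrightarrow> qinf w p * G w"
    using it[OF w] by simp_all
  hence "qinf w p * G w = 1" using G0 LIMSEQ_unique by metis
  thus "qinf w p \<noteq> 0" by auto
  with \<open>qinf w p * G w = 1\<close> have "G w = 1 / qinf w p" by (simp add: field_simps)
  thus "(\<lambda>k. fc p k * w ^ k) sums (1 / qinf w p)" using sG[OF w] by simp
qed

section \<open>Integer-indexed sums\<close>

lemma UNIV_int_split: "(UNIV :: int set) = range int \<union> range (\<lambda>m. - int (Suc m))"
proof -
  have "n \<in> range int \<union> range (\<lambda>m. - int (Suc m))" for n :: int
  proof (cases "n \<ge> 0")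
    case True thus ?thesis by (metis UnI1 nonneg_int_cases rangeI)
  next
    case False
    hence "n = - int (Suc (nat (- n - 1)))" by simp
    thus ?thesis by blast
  qed
  thus ?thesis by auto
qed

lemma int_split_disj: "range int \<inter> range (\<lambda>m. - int (Suc m)) = {}"
  by auto

lemma inj_neg_Suc: "inj (\<lambda>m. - int (Suc m))"
  by (auto simp: inj_def)

lemma int_abs_summable:
  fixes f :: "int \<Rightarrow> complex"
  assumes "summable (\<lambda>n. norm (f (int n)))" "summable (\<lambda>m. norm (f (- int (Suc m))))"
  shows "(\<lambda>n. norm (f n)) summable_on UNIV"
proof -
  have "((\<lambda>n. norm (f n)) \<circ> int) summable_on UNIV"
    using norm_summable_imp_summable_on[of "\<lambda>n. norm (f (int n))"] assms(1) by (simp add: o_def)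
  hence 1: "(\<lambda>n. norm (f n)) summable_on range int"
    by (subst summable_on_reindex) auto
  have "((\<lambda>n. norm (f n)) \<circ> (\<lambda>m. - int (Suc m))) summable_on UNIV"
    using norm_summable_imp_summable_on[of "\<lambda>m. norm (f (- int (Suc m)))"] assms(2) by (simp add: o_def)
  hence 2: "(\<lambda>n. norm (f n)) summable_on range (\<lambda>m. - int (Suc m))"
    by (subst summable_on_reindex) (auto simp: inj_def)
  show ?thesis using summable_on_Un_disjoint[OF 1 2 int_split_disj] UNIV_int_split by simp
qed

lemma int_has_sum_split:
  fixes f :: "int \<Rightarrow> complex"
  assumes "(f has_sum S) UNIV"
  shows "\<exists>A B. (\<lambda>n. f (int n)) sums A \<and> (\<lambda>m. f (- int (Suc m))) sums B \<and> S = A + B"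
proof -
  have sf: "f summable_on UNIV" using assms summable_on_def by blast
  have s1: "f summable_on range int" by (rule summable_on_subset_banach[OF sf]) auto
  have s2: "f summable_on range (\<lambda>m. - int (Suc m))" by (rule summable_on_subset_banach[OF sf]) auto
  define A where "A = infsum f (range int)"
  define B where "B = infsum f (range (\<lambda>m. - int (Suc m)))"
  have hA: "(f has_sum A) (range int)" using s1 A_def by simp
  have hB: "(f has_sum B) (range (\<lambda>m. - int (Suc m)))" using s2 B_def by simp
  have "(f has_sum (A + B)) UNIV"
    using has_sum_Un_disjoint[OF hA hB int_split_disj] UNIV_int_split by simp
  hence "S = A + B" using assms has_sum_unique by blast
  moreover have "(\<lambda>n. f (int n)) sums A"
    using hA by (subst (asm) has_sum_reindex) (auto simp: o_def intro: has_sum_imp_sums)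
  moreover have "(\<lambda>m. f (- int (Suc m))) sums B"
    using hB by (subst (asm) has_sum_reindex) (auto simp: o_def inj_def intro: has_sum_imp_sums)
  ultimately show ?thesis by blast
qed

definition tt :: "complex \<Rightarrow> complex \<Rightarrow> int \<Rightarrow> complex" where
  "tt p x n = (-1) powi n * p powi (n * (n - 1) div 2) * x powi n"

lemma int_tri: "int m * (int m - 1) div 2 = int (tri m)"
proof (cases m)
  case 0 thus ?thesis by (simp add: tri_def)
next
  case (Suc k)
  have "int (Suc k * k) = int (Suc k) * (int (Suc k) - 1)" by (simp add: algebra_simps)
  hence "int m * (int m - 1) div 2 = int (Suc k * k) div 2" using Suc by simp
  also have "\<dots> = int (Suc k * k div 2)" by (simp add: zdiv_int)
  finally show ?thesis using Suc by (simp add: tri_def)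
qed

lemma tt_nat: "tt p x (int m) = (-1) ^ m * p ^ tri m * x ^ m"
  unfolding tt_def by (simp add: int_tri)

lemma neg_tri: "(- int (Suc m)) * (- int (Suc m) - 1) div 2 = int (tri (Suc (Suc m)))"
proof -
  have eq: "(- int (Suc m)) * (- int (Suc m) - 1) = int (Suc (Suc m)) * (int (Suc (Suc m)) - 1)"
    by (simp add: algebra_simps)
  show ?thesis by (subst eq, rule int_tri)
qed

lemma tt_neg: "tt p x (- int (Suc m)) = (-1) ^ Suc m * p ^ tri (Suc (Suc m)) * (1 / x) ^ Suc m"
proof -
  have a: "(-1::complex) powi (- int (Suc m)) = (-1) ^ Suc m"
    by (cases "even m") (simp_all add: power_int_minus)
  have b: "x powi (- int (Suc m)) = (1 / x) ^ Suc m"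
    unfolding power_int_minus power_int_of_nat by (simp add: power_one_over inverse_eq_divide)
  show ?thesis unfolding tt_def a b neg_tri by simp
qed

lemma tt_summable:
  fixes p x :: complex assumes p: "norm p < 1" and x: "x \<noteq> 0"
  shows "(\<lambda>n. norm (tt p x n)) summable_on UNIV" "tt p x summable_on UNIV"
proof -
  have 1: "summable (\<lambda>n. norm (tt p x (int n)))"
  proof (rule ratio_summable)
    fix n
    show "norm (tt p x (int (Suc n))) \<le> (norm p ^ n * norm x) * norm (tt p x (int n))"
      unfolding tt_nat by (simp add: tri_Suc norm_mult norm_power power_add)
    show "(\<lambda>n. norm p ^ n * norm x) \<longlonglongrightarrow> 0 * norm x"
      using p by (intro tendsto_intros LIMSEQ_power_zero) auto
  qed simp
  have 2: "summable (\<lambda>n. norm (tt p x (- int (Suc n))))"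
  proof (rule ratio_summable)
    fix n
    have "tri (Suc (Suc (Suc n))) = tri (Suc (Suc n)) + Suc (Suc n)" by (rule tri_Suc)
    thus "norm (tt p x (- int (Suc (Suc n)))) \<le> (norm p ^ (Suc (Suc n)) / norm x) * norm (tt p x (- int (Suc n)))"
      unfolding tt_neg using x by (simp add: norm_mult norm_power power_add norm_divide field_simps)
    show "(\<lambda>n. norm p ^ (Suc (Suc n)) / norm x) \<longlonglongrightarrow> 0"
    proof -
      have "(\<lambda>n. norm p ^ 2 * norm p ^ n / norm x) \<longlonglongrightarrow> norm p ^ 2 * 0 / norm x"
        using p x by (intro tendsto_intros LIMSEQ_power_zero) auto
      moreover have "norm p ^ 2 * norm p ^ n / norm x = norm p ^ (Suc (Suc n)) / norm x" for n
        by (simp add: power2_eq_square)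
      ultimately show ?thesis by simp
    qed
  qed simp
  show "(\<lambda>n. norm (tt p x n)) summable_on UNIV" by (rule int_abs_summable[OF 1 2])
  thus "tt p x summable_on UNIV" by (rule abs_summable_summable)
qed



lemma prod_abs_summable:
  fixes f :: "'a \<Rightarrow> complex" and g :: "'b \<Rightarrow> complex"
  assumes f: "(\<lambda>x. norm (f x)) summable_on UNIV" and g: "(\<lambda>y. norm (g y)) summable_on UNIV"
  shows "(\<lambda>(x,y). f x * g y) summable_on UNIV"
proof -
  define G where "G = infsum (\<lambda>y. norm (g y)) UNIV"
  have "(\<lambda>(x,y). norm (f x) * norm (g y)) summable_on Sigma UNIV (\<lambda>_. UNIV)"
  proof (rule summable_on_SigmaI[where g = "\<lambda>x. norm (f x) * G"])
    fix x :: 'a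
    show "((\<lambda>y. case (x, y) of (x, y) \<Rightarrow> norm (f x) * norm (g y)) has_sum norm (f x) * G) UNIV"
    proof -
      have "((\<lambda>y. norm (g y)) has_sum G) UNIV" using g by (simp add: G_def)
      from has_sum_cmult_right[OF this, where c="norm (f x)"] show ?thesis by simp
    qed
    show "(\<lambda>x. norm (f x) * G) summable_on UNIV" by (rule summable_on_cmult_left[OF f])
  qed auto
  hence "(\<lambda>z. norm ((\<lambda>(x,y). f x * g y) z)) summable_on UNIV"
    by (simp add: case_prod_beta' norm_mult)
  thus ?thesis by (rule abs_summable_summable)
qed

lemma int_exp_split:
  fixes a c :: int
  shows "(a + c) * (a + c - 1) div 2 = a * (a - 1) div 2 + c * (c - 1) div 2 + a * c"
proof -
  have "even (a * (a - 1))" "even (c * (c - 1))" by auto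
  then obtain u v where u: "a * (a - 1) = 2 * u" and v: "c * (c - 1) = 2 * v" by (metis evenE)
  have "(a + c) * (a + c - 1) = 2 * (u + v + a * c)" using u v by (simp add: algebra_simps)
  thus ?thesis using u v by simp
qed

lemma core_term:
  fixes p x b :: complex
  assumes p: "p \<noteq> 0" and x: "x \<noteq> 0"
  shows "tt p x (n + int k) * (fc p k * (b / x) ^ k) = tt p x n * (ec p k * (b * p powi n) ^ k)"
proof -
  have e: "(n + int k) * (n + int k - 1) div 2 = n * (n - 1) div 2 + int (tri k) + n * int k"
    using int_exp_split[of n "int k"] int_tri[of k] by simp
  have 1: "(-1::complex) powi (n + int k) = (-1) powi n * (-1) ^ k" by (simp add: power_int_add)
  have 2: "x powi (n + int k) = x powi n * x ^ k" using x by (simp add: power_int_add)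
  have 3: "p powi (n * (n - 1) div 2 + int (tri k) + n * int k) = p powi (n * (n - 1) div 2) * p ^ tri k * (p powi n) ^ k"
    using p by (simp add: power_int_add power_int_mult)
  show ?thesis unfolding tt_def e 1 2 3 ec_def fc_def using x
    by (simp add: power_mult_distrib field_simps)
qed

lemma core:
  fixes p x b :: complex
  assumes p: "norm p < 1" "p \<noteq> 0" and x: "x \<noteq> 0" and bx: "norm (b / x) < 1"
  shows "((\<lambda>n. tt p x n * qinf (b * p powi n) p) has_sum (infsum (tt p x) UNIV / qinf (b / x) p)) UNIV"
proof -
  define T where "T = infsum (tt p x) UNIV"
  define E where "E = 1 / qinf (b / x) p"
  have hT: "(tt p x has_sum T) UNIV" using tt_summable[OF p(1) x] T_def by simp
  have aE: "summable (\<lambda>k. norm (fc p k * (b / x) ^ k))" by (rule E2_summable[OF p(1) bx])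
  have hE: "((\<lambda>k. fc p k * (b / x) ^ k) has_sum E) UNIV"
    unfolding E_def by (rule norm_summable_imp_has_sum[OF aE E2(1)[OF p(1) bx]])
  define h where "h = (\<lambda>(N::int, k::nat). tt p x N * (fc p k * (b / x) ^ k))"
  have sh: "h summable_on UNIV" unfolding h_def
  proof (rule prod_abs_summable)
    show "(\<lambda>n. norm (tt p x n)) summable_on UNIV" using tt_summable[OF p(1) x] by simp
    show "(\<lambda>k. norm (fc p k * (b / x) ^ k)) summable_on UNIV"
      using norm_summable_imp_summable_on[of "\<lambda>k. norm (fc p k * (b / x) ^ k)"] aE by simp
  qed
  have hh: "(h has_sum T * E) (Sigma UNIV (\<lambda>_. UNIV))"
  proof (rule has_sum_SigmaI[where g = "\<lambda>N. tt p x N * E"])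
    fix N :: int
    show "((\<lambda>k. h (N, k)) has_sum tt p x N * E) UNIV"
      unfolding h_def using has_sum_cmult_right[OF hE, of "tt p x N"] by simp
  next
    show "((\<lambda>N. tt p x N * E) has_sum T * E) UNIV" by (rule has_sum_cmult_left[OF hT])
    show "h summable_on Sigma UNIV (\<lambda>_. UNIV)" using sh by simp
  qed
  define \<phi> where "\<phi> = (\<lambda>(n::int, k::nat). (n + int k, k))"
  have bij: "bij_betw \<phi> UNIV UNIV"
  proof (rule bij_betwI[where g = "\<lambda>(n, k). (n - int k, k)"])
  qed (auto simp: \<phi>_def)
  have "((\<lambda>z. h (\<phi> z)) has_sum T * E) UNIV"
    using hh has_sum_reindex_bij_betw[OF bij, of h] by simp
  moreover have "(\<lambda>z. h (\<phi> z)) = (\<lambda>(n,k). tt p x n * (ec p k * (b * p powi n) ^ k))"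
  proof (rule ext, clarify)
    fix n k show "h (\<phi> (n, k)) = tt p x n * (ec p k * (b * p powi n) ^ k)"
    unfolding h_def \<phi>_def using core_term[OF p(2) x] by simp
  qed
  ultimately have hh2: "((\<lambda>(n,k). tt p x n * (ec p k * (b * p powi n) ^ k)) has_sum T * E) (Sigma UNIV (\<lambda>_. UNIV))"
    by (simp add: case_prod_beta')
  have "((\<lambda>n. tt p x n * qinf (b * p powi n) p) has_sum T * E) UNIV"
  proof (rule has_sum_SigmaD[OF hh2])
    fix n :: int
    have "((\<lambda>k. ec p k * (b * p powi n) ^ k) has_sum qinf (b * p powi n) p) UNIV"
      by (rule norm_summable_imp_has_sum[OF E1_summable[OF p(1)] E1[OF p(1)]])
    thus "((\<lambda>k. case (n, k) of (n, k) \<Rightarrow> tt p x n * (ec p k * (b * p powi n) ^ k)) has_sum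
          tt p x n * qinf (b * p powi n) p) UNIV"
      using has_sum_cmult_right by simp
  qed
  thus ?thesis by (simp add: T_def E_def)
qed

lemma JTP:
  fixes p x :: complex
  assumes p: "norm p < 1" "p \<noteq> 0" and x: "x \<noteq> 0" and px: "norm (p / x) < 1"
  shows "(tt p x has_sum (qinf p p * qinf x p * qinf (p / x) p)) UNIV"
proof -
  define T where "T = infsum (tt p x) UNIV"
  have hT: "(tt p x has_sum T) UNIV" using tt_summable[OF p(1) x] T_def by simp
  have H: "((\<lambda>n. tt p x n * qinf (p * p powi n) p) has_sum T / qinf (p / x) p) UNIV"
    using core[OF p x px] T_def by simp
  obtain A B where A: "(\<lambda>n. tt p x (int n) * qinf (p * p powi int n) p) sums A"
    and B: "(\<lambda>m. tt p x (- int (Suc m)) * qinf (p * p powi (- int (Suc m))) p) sums B"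
    and AB: "T / qinf (p / x) p = A + B"
    using int_has_sum_split[OF H] by blast
  have "qinf (p * p powi (- int (Suc m))) p = 0" for m
  proof (rule qinf_zero[OF p(1), where j = m])
    show "p * p powi (- int (Suc m)) * p ^ m = 1"
      unfolding power_int_minus power_int_of_nat using p(2) by (simp add: field_simps)
  qed
  hence "B = 0" using B sums_unique by fastforce
  have "tt p x (int n) * qinf (p * p powi int n) p = qinf p p * (ec p n * x ^ n)" for n
  proof -
    have nz: "qpoch p p n \<noteq> 0" by (rule qpoch_pp_nz[OF p(1)])
    have "qinf p p = qpoch p p n * qinf (p * p ^ n) p" by (rule qinf_split[OF p(1)])
    hence "qinf (p * p ^ n) p = qinf p p / qpoch p p n" using nz by (simp add: field_simps)
    thus ?thesis unfolding tt_nat ec_def by simp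
  qed
  hence "(\<lambda>n. qinf p p * (ec p n * x ^ n)) sums A" using A by simp
  moreover have "(\<lambda>n. qinf p p * (ec p n * x ^ n)) sums (qinf p p * qinf x p)"
    by (intro sums_mult E1[OF p(1)])
  ultimately have "A = qinf p p * qinf x p" using sums_unique2 by blast
  moreover have "qinf (p / x) p \<noteq> 0" by (rule E2(2)[OF p(1) px])
  ultimately have "T = qinf p p * qinf x p * qinf (p / x) p" using AB \<open>B = 0\<close>
    by (simp add: field_simps)
  thus ?thesis using hT by simp
qed

lemma qinfZ:
  fixes p b :: complex
  assumes p: "norm p < 1" "p \<noteq> 0" and b: "qinf b p \<noteq> 0"
  shows "qinf (b * p powi n) p = qinf b p / qpochZ b p n"
proof (cases "n \<ge> 0")
  case True
  then obtain m where n: "n = int m" by (metis nonneg_int_cases)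
  have sp: "qinf b p = qpoch b p m * qinf (b * p ^ m) p" by (rule qinf_split[OF p(1)])
  hence "qpoch b p m \<noteq> 0" using b by auto
  thus ?thesis using sp unfolding n qpochZ_def by (simp add: field_simps)
next
  case False
  define m where "m = nat (- n)"
  have n: "n = - int m" using False m_def by simp
  have sp: "qinf (b * p powi n) p = qpoch (b * p powi n) p m * qinf (b * p powi n * p ^ m) p"
    by (rule qinf_split[OF p(1)])
  have e: "b * p powi n * p ^ m = b" unfolding n power_int_minus power_int_of_nat using p(2)
    by (simp add: field_simps)
  have "qinf (b * p powi n) p = qpoch (b * p powi n) p m * qinf b p" using sp unfolding e .
  thus ?thesis unfolding qpochZ_def using False m_def by simp
qed

lemma M:
  fixes p x b :: complex
  assumes p: "norm p < 1" "p \<noteq> 0" and x: "x \<noteq> 0" and bx: "norm (b / x) < 1"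
    and px: "norm (p / x) < 1" and b: "qinf b p \<noteq> 0"
  shows "((\<lambda>n. tt p x n / qpochZ b p n) has_sum
           (qinf p p * qinf x p * qinf (p / x) p / (qinf b p * qinf (b / x) p))) UNIV"
proof -
  have T: "infsum (tt p x) UNIV = qinf p p * qinf x p * qinf (p / x) p"
    using JTP[OF p x px] by (rule infsumI)
  have H: "((\<lambda>n. tt p x n * qinf (b * p powi n) p) has_sum
            (qinf p p * qinf x p * qinf (p / x) p / qinf (b / x) p)) UNIV"
    using core[OF p x bx] T by simp
  have "((\<lambda>n. (1 / qinf b p) * (tt p x n * qinf (b * p powi n) p)) has_sum
            (1 / qinf b p) * (qinf p p * qinf x p * qinf (p / x) p / qinf (b / x) p)) UNIV"
    by (rule has_sum_cmult_right[OF H])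
  moreover have "(1 / qinf b p) * (tt p x n * qinf (b * p powi n) p) = tt p x n / qpochZ b p n" for n
    unfolding qinfZ[OF p b] using b by simp
  ultimately show ?thesis by simp
qed




lemma small_ne_1:
  fixes a p :: complex
  assumes "norm a < 1" "norm p \<le> 1"
  shows "a * p ^ j \<noteq> 1"
proof
  assume "a * p ^ j = 1"
  hence "norm a * norm p ^ j = 1" by (metis norm_mult norm_one norm_power)
  moreover have "norm p ^ j \<le> 1" using assms by (simp add: power_le_one)
  ultimately show False using assms(1)
    by (smt (verit, ccfv_SIG) mult_left_le norm_ge_zero)
qed

lemma qinf_nz_small:
  fixes a p :: complex
  assumes "norm p < 1" "norm a < 1"
  shows "qinf a p \<noteq> 0"
  using assms by (intro qinf_nz small_ne_1) auto

lemma qpochZ_neg: "qpochZ a b (- int m) = 1 / qpoch (a * b powi (- int m)) b m"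
  unfolding qpochZ_def by (cases "m = 0") auto

lemma refl1:
  fixes a p :: complex
  assumes p: "p \<noteq> 0"
  shows "qpoch (a * p powi (- int m)) p m = (\<Prod>i<m. 1 - a / p ^ Suc i)"
proof -
  have "qpoch (a * p powi (- int m)) p m = (\<Prod>i<m. 1 - a * p powi (- int m) * p ^ (m - Suc i))"
    unfolding qpoch_def by (rule prod.nat_diff_reindex[symmetric])
  also have "\<dots> = (\<Prod>i<m. 1 - a / p ^ Suc i)"
  proof (rule prod.cong)
    fix i assume "i \<in> {..<m}"
    hence "m = (m - Suc i) + Suc i" by simp
    hence "p ^ m = p ^ (m - Suc i) * p ^ Suc i" by (metis power_add)
    thus "1 - a * p powi (- int m) * p ^ (m - Suc i) = 1 - a / p ^ Suc i"
      unfolding power_int_minus power_int_of_nat using p by (simp add: field_simps)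
  qed simp
  finally show ?thesis .
qed

lemma refl2:
  fixes a p :: complex
  assumes p: "p \<noteq> 0" and a: "a \<noteq> 0"
  shows "(\<Prod>i<m. 1 - a / p ^ Suc i) = (-a) ^ m * qpoch (p / a) p m / p ^ tri (Suc m)"
proof (induction m)
  case 0 thus ?case by (simp add: tri_def)
next
  case (Suc m)
  have "(\<Prod>i<Suc m. 1 - a / p ^ Suc i) = (-a) ^ m * qpoch (p / a) p m / p ^ tri (Suc m) * (1 - a / p ^ Suc m)"
    using Suc by simp
  also have "\<dots> = (-a) ^ Suc m * qpoch (p / a) p (Suc m) / p ^ tri (Suc (Suc m))"
    unfolding qpoch_Suc tri_Suc[of "Suc m"] using p a by (simp add: field_simps power_add)
  finally show ?case .
qed

lemma refl:
  fixes a p :: complex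
  assumes p: "p \<noteq> 0" and a: "a \<noteq> 0"
  shows "qpoch (a * p powi (- int m)) p m = (-a) ^ m * qpoch (p / a) p m / p ^ tri (Suc m)"
  using refl1[OF p] refl2[OF p a] by simp

lemma tri2: "2 * tri k = k * (k - 1)"
proof -
  have "even (k * (k - 1))" by auto
  thus ?thesis unfolding tri_def by simp
qed

lemma evenodd_prod:
  fixes f :: "nat \<Rightarrow> complex"
  assumes "convergent_prod f" "convergent_prod (\<lambda>i. f (2 * i))" "convergent_prod (\<lambda>i. f (2 * i + 1))"
  shows "prodinf f = prodinf (\<lambda>i. f (2 * i)) * prodinf (\<lambda>i. f (2 * i + 1))"
proof -
  have 1: "(\<lambda>n. \<Prod>k<n. f k) \<longlonglongrightarrow> prodinf f"
    using has_prod_imp_tendsto'[OF convergent_prod_has_prod[OF assms(1)]] .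
  have "strict_mono (\<lambda>n::nat. 2 * n)" by (auto simp: strict_mono_def)
  from LIMSEQ_subseq_LIMSEQ[OF 1 this] have a: "(\<lambda>n. \<Prod>k<2 * n. f k) \<longlonglongrightarrow> prodinf f"
    by (simp add: o_def)
  have b: "(\<lambda>n. (\<Prod>k<n. f (2 * k)) * (\<Prod>k<n. f (2 * k + 1))) \<longlonglongrightarrow>
           prodinf (\<lambda>i. f (2 * i)) * prodinf (\<lambda>i. f (2 * i + 1))"
    by (intro tendsto_mult has_prod_imp_tendsto' convergent_prod_has_prod assms)
  have "(\<Prod>k<2 * n. f k) = (\<Prod>k<n. f (2 * k)) * (\<Prod>k<n. f (2 * k + 1))" for n
    by (induction n) (simp_all add: mult_ac)
  with a b show ?thesis using LIMSEQ_unique by fastforce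
qed

lemma cesaro_conv:
  fixes V :: "nat \<Rightarrow> complex"
  assumes "V \<longlonglongrightarrow> L"
  shows "(\<lambda>N. (\<Sum>n<N. V n) / of_nat (Suc N)) \<longlonglongrightarrow> L"
proof -
  define D where "D = (\<lambda>n. V n - L)"
  have D: "D \<longlonglongrightarrow> 0" using assms unfolding D_def by (simp add: LIM_zero)
  have m0: "(\<lambda>N. (\<Sum>n<N. D n) / of_nat (Suc N)) \<longlonglongrightarrow> 0"
  proof (rule LIMSEQ_I)
    fix r :: real assume r: "r > 0"
    then obtain N0 where N0: "\<And>n. n \<ge> N0 \<Longrightarrow> norm (D n) < r / 2"
      using D LIMSEQ_D[of D 0 "r/2"] by auto
    define C where "C = (\<Sum>n<N0. norm (D n))"
    have C: "C \<ge> 0" unfolding C_def by (intro sum_nonneg) auto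
    obtain N1 :: nat where N1: "real N1 > 2 * C / r" using reals_Archimedean2 by blast
    show "\<exists>no. \<forall>N\<ge>no. norm ((\<Sum>n<N. D n) / of_nat (Suc N) - 0) < r"
    proof (intro exI allI impI)
      fix N assume N: "N \<ge> max N0 N1"
      have split: "{..<N} = {..<N0} \<union> {N0..<N}" using N by auto
      have "norm (\<Sum>n<N. D n) \<le> (\<Sum>n<N. norm (D n))" by (rule norm_sum)
      also have "\<dots> = C + (\<Sum>n\<in>{N0..<N}. norm (D n))"
        unfolding C_def split by (subst sum.union_disjoint) auto
      also have "(\<Sum>n\<in>{N0..<N}. norm (D n)) \<le> (\<Sum>n\<in>{N0..<N}. r / 2)"
        by (intro sum_mono) (use N0 in \<open>auto intro: less_imp_le\<close>)
      also have "\<dots> = real (N - N0) * (r / 2)" by simp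
      also have "\<dots> \<le> real N * (r / 2)" using r by (intro mult_right_mono) auto
      finally have le: "norm (\<Sum>n<N. D n) \<le> C + real N * (r / 2)" by simp
      have "C < real (Suc N) * (r / 2)"
      proof -
        have "2 * C / r < real N" using N1 N by linarith
        hence "2 * C < real N * r" using r by (simp add: field_simps)
        thus ?thesis using r by (simp add: field_simps)
      qed
      hence "norm (\<Sum>n<N. D n) < r * real (Suc N)"
        using le r by (simp add: field_simps)
      moreover have "norm (of_nat (Suc N) :: complex) = real (Suc N)" by (rule norm_of_nat)
      ultimately show "norm ((\<Sum>n<N. D n) / of_nat (Suc N) - 0) < r"
        by (simp only: norm_divide diff_zero) (simp add: divide_less_eq del: of_nat_Suc)
    qed
  qed
  have m1: "(\<lambda>N. L / of_nat (Suc N)) \<longlonglongrightarrow> 0"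
  proof -
    have "(\<lambda>N. L * (1 / of_nat (Suc N))) \<longlonglongrightarrow> L * 0"
      by (intro tendsto_intros LIMSEQ_Suc[OF lim_const_over_n])
    thus ?thesis by simp
  qed
  have "(\<lambda>N. (\<Sum>n<N. D n) / of_nat (Suc N) - L / of_nat (Suc N) + L) \<longlonglongrightarrow> 0 - 0 + L"
    by (intro tendsto_intros m0 m1)
  moreover have "(\<Sum>n<N. D n) / of_nat (Suc N) - L / of_nat (Suc N) + L = (\<Sum>n<N. V n) / of_nat (Suc N)" for N
  proof -
    have nz: "(of_nat (Suc N) :: complex) \<noteq> 0" by (rule of_nat_neq_0)
    show ?thesis unfolding D_def using nz by (simp add: sum_subtractf field_simps del: of_nat_Suc) (simp add: algebra_simps)
  qed
  ultimately show ?thesis by simp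
qed

lemma cesaro_pair:
  fixes U :: "nat \<Rightarrow> complex"
  assumes lim: "(\<lambda>n. U n + U (Suc n)) \<longlonglongrightarrow> L" and bd: "Bseq (\<lambda>n. U (Suc n) - U n)"
  shows "(\<lambda>N. (\<Sum>n\<le>N. U n) / of_nat (Suc N)) \<longlonglongrightarrow> L / 2"
proof -
  define V where "V = (\<lambda>n. U n + U (Suc n))"
  have "Bseq V" using lim unfolding V_def by (rule convergent_imp_Bseq[OF convergentI])
  then obtain K1 where K1: "K1 > 0" "\<And>n. norm (V n) \<le> K1" by (auto simp: Bseq_def)
  obtain K2 where K2: "K2 > 0" "\<And>n. norm (U (Suc n) - U n) \<le> K2" using bd by (auto simp: Bseq_def)
  have Ub: "norm (U n) \<le> (K1 + K2) / 2" for n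
  proof -
    have "2 * U n = V n - (U (Suc n) - U n)" unfolding V_def by simp
    hence "norm (2 * U n) \<le> norm (V n) + norm (U (Suc n) - U n)" by (metis norm_triangle_ineq4)
    thus ?thesis using K1(2)[of n] K2(2)[of n] by (simp add: norm_mult)
  qed
  have key: "2 * (\<Sum>n\<le>N. U n) = U 0 + U N + (\<Sum>n<N. V n)" for N
    unfolding V_def by (induction N) (simp_all add: algebra_simps)
  have c1: "(\<lambda>N. (\<Sum>n<N. V n) / of_nat (Suc N)) \<longlonglongrightarrow> L"
    using cesaro_conv lim V_def by simp
  have c2: "(\<lambda>N. (U 0 + U N) / of_nat (Suc N)) \<longlonglongrightarrow> 0"
  proof (rule Lim_null_comparison)
    show "\<forall>\<^sub>F N in sequentially. norm ((U 0 + U N) / of_nat (Suc N)) \<le> (K1 + K2) * (1 / real (Suc N))"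
    proof (intro always_eventually allI)
      fix N
      have "norm (U 0 + U N) \<le> K1 + K2" using Ub[of 0] Ub[of N] norm_triangle_ineq[of "U 0" "U N"] by argo
      thus "norm ((U 0 + U N) / of_nat (Suc N)) \<le> (K1 + K2) * (1 / real (Suc N))"
        by (simp add: norm_divide divide_right_mono del: of_nat_Suc)
    qed
    show "(\<lambda>N. (K1 + K2) * (1 / real (Suc N))) \<longlonglongrightarrow> 0"
      using tendsto_mult_right_zero[OF LIMSEQ_Suc[OF lim_const_over_n[of 1]]] by simp
  qed
  have "(\<lambda>N. ((U 0 + U N) / of_nat (Suc N) + (\<Sum>n<N. V n) / of_nat (Suc N)) / 2) \<longlonglongrightarrow> (0 + L) / 2"
    by (intro tendsto_intros c1 c2) simp
  moreover have eq: "((U 0 + U N) / of_nat (Suc N) + (\<Sum>n<N. V n) / of_nat (Suc N)) / 2 = (\<Sum>n\<le>N. U n) / of_nat (Suc N)" for N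
  proof -
    have "(\<Sum>n\<le>N. U n) * 2 = U 0 + U N + (\<Sum>n<N. V n)" using key[of N] by (simp add: mult.commute)
    hence "(\<Sum>n\<le>N. U n) = (U 0 + U N + (\<Sum>n<N. V n)) / 2" by (simp add: eq_divide_eq)
    thus ?thesis by (simp add: add_divide_distrib mult.commute)
  qed
  ultimately show ?thesis by (simp only: eq add_0_left)
qed




lemma tt_sq:
  fixes q x :: complex assumes q: "q \<noteq> 0"
  shows "tt (q^2) x n = (-1) powi n * q powi (n * (n - 1)) * x powi n"
proof -
  have "even (n * (n - 1))" by auto
  hence e: "2 * (n * (n - 1) div 2) = n * (n - 1)" by (rule dvd_mult_div_cancel)
  have "q powi (2 * (n * (n - 1) div 2)) = (q powi 2) powi (n * (n - 1) div 2)"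
    by (rule power_int_mult)
  hence "(q^2) powi (n * (n - 1) div 2) = q powi (2 * (n * (n - 1) div 2))"
    by simp
  also have "\<dots> = q powi (n * (n - 1))" by (simp only: e)
  finally show ?thesis unfolding tt_def by simp
qed

lemma inv_qpochZ_neg:
  fixes q a :: complex assumes q: "q \<noteq> 0" and a: "a \<noteq> 0"
  shows "1 / qpochZ a (q^2) (- int M) = (-a) ^ M * qpoch (q^2 / a) (q^2) M / q ^ (M * M + M)"
proof -
  have "(q^2) ^ tri (Suc M) = q ^ (2 * tri (Suc M))" by (simp add: power_mult)
  also have "2 * tri (Suc M) = M * M + M" by (simp add: tri2)
  finally have e: "(q^2) ^ tri (Suc M) = q ^ (M * M + M)" .
  show ?thesis unfolding qpochZ_neg using refl[of "q^2" a M] q a e by simp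
qed

lemma nsq_pow: "(q::complex) powi ((- int M)^2) = q ^ (M * M)"
proof -
  have h: "(- int M)^2 = int (M * M)" by (simp add: power2_eq_square)
  show ?thesis by (simp only: h power_int_of_nat)
qed

lemma pos_sq_pow: "(q::complex) powi ((int n)^2) = q ^ (n^2)"
  by (metis of_nat_power power_int_of_nat)

lemma phi_bilateral:
  fixes q :: complex assumes q: "norm q < 1" "q \<noteq> 0"
  shows "((\<lambda>n::int. q powi (n^2) / qpochZ (-(q^2)) (q^2) n) has_sum
     (qinf (-q) (q^2) * qinf (-q) (q^2) * qinf (q^2) (q^2) / (qinf q (q^2) * qinf (-(q^2)) (q^2)))) UNIV"
proof -
  have p: "norm (q^2) < 1" "q^2 \<noteq> 0" using q by (auto simp: norm_power power_less_one_iff)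
  have e1: "q^2 / (-q) = -q" "-(q^2) / (-q) = q" using q by (simp_all add: power2_eq_square)
  have bz: "qinf (-(q^2)) (q^2) \<noteq> 0" using p by (intro qinf_nz_small) auto
  have H: "((\<lambda>n. tt (q^2) (-q) n / qpochZ (-(q^2)) (q^2) n) has_sum
      (qinf (q^2) (q^2) * qinf (-q) (q^2) * qinf (-q) (q^2) / (qinf (-(q^2)) (q^2) * qinf q (q^2)))) UNIV"
    using M[OF p, of "-q" "-(q^2)"] q e1 bz by simp
  have tt: "tt (q^2) (-q) n = q powi (n^2)" for n
  proof -
    have "(-q) powi n = (-1) powi n * q powi n" by (simp add: power_int_mult_distrib[symmetric])
    hence "tt (q^2) (-q) n = ((-1) * (-1)) powi n * (q powi (n * (n - 1)) * q powi n)"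
      unfolding tt_sq[OF q(2)] by (simp add: power_int_mult_distrib mult_ac)
    also have "q powi (n * (n - 1)) * q powi n = q powi (n * (n - 1) + n)"
      using q(2) by (simp add: power_int_add)
    also have "n * (n - 1) + n = n^2" by (simp add: power2_eq_square algebra_simps)
    finally show ?thesis by simp
  qed
  show ?thesis using H unfolding tt by (simp add: mult_ac)
qed

lemma conj12:
  fixes q :: complex assumes q: "norm q < 1" "q \<noteq> 0"
  shows "(\<lambda>r. qpoch (-1) (q^2) (Suc r) * q ^ (Suc r)) sums
        (qinf (-q) (q^2) * qinf (-q) (q^2) * qinf (q^2) (q^2)
           / (qinf q (q^2) * qinf (-(q^2)) (q^2)) - mock_phi q)"
proof -
  obtain A B where A: "(\<lambda>n. q powi ((int n)^2) / qpochZ (-(q^2)) (q^2) (int n)) sums A"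
    and B: "(\<lambda>m. q powi ((- int (Suc m))^2) / qpochZ (-(q^2)) (q^2) (- int (Suc m))) sums B"
    and AB: "qinf (-q) (q^2) * qinf (-q) (q^2) * qinf (q^2) (q^2) / (qinf q (q^2) * qinf (-(q^2)) (q^2)) = A + B"
    using int_has_sum_split[OF phi_bilateral[OF q]] by blast
  have "(\<lambda>n. q ^ (n^2) / qpoch (- (q^2)) (q^2) n) sums A"
    using A by (simp add: qpochZ_def pos_sq_pow)
  hence "mock_phi q = A" unfolding mock_phi_def by (rule sums_unique[symmetric])
  moreover have "q powi ((- int (Suc m))^2) / qpochZ (-(q^2)) (q^2) (- int (Suc m)) = qpoch (-1) (q^2) (Suc m) * q ^ (Suc m)" for m
  proof -
    define M where "M = Suc m"
    have "q powi ((- int M)^2) / qpochZ (-(q^2)) (q^2) (- int M) = q ^ (M * M) * (1 / qpochZ (-(q^2)) (q^2) (- int M))"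
      unfolding nsq_pow by simp
    also have "1 / qpochZ (-(q^2)) (q^2) (- int M) = (q^2) ^ M * qpoch (-1) (q^2) M / q ^ (M * M + M)"
    proof -
      have a: "-(q^2) \<noteq> 0" using q(2) by simp
      have "q^2 / (-(q^2)) = -1" using q(2) by simp
      thus ?thesis using inv_qpochZ_neg[OF q(2) a, of M] by simp
    qed
    also have "q ^ (M * M) * ((q^2) ^ M * qpoch (-1) (q^2) M / q ^ (M * M + M)) = qpoch (-1) (q^2) M * q ^ M"
    proof -
      have e1: "(q^2)^M = q^M * q^M" by (simp add: power2_eq_square power_mult_distrib)
      have e2: "q^(M*M+M) = q^(M*M) * q^M" by (simp add: power_add)
      have nz: "q^M \<noteq> 0" "q^(M*M) \<noteq> 0" using q(2) by auto
      show ?thesis unfolding e1 e2 using nz by (simp add: field_simps)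
    qed
    finally show ?thesis unfolding M_def .
  qed
  ultimately show ?thesis using B AB by simp
qed

lemma qpochZ_nat: "qpochZ a b (int m) = qpoch a b m"
  by (simp add: qpochZ_def)

lemma qinf_sq_split:
  fixes q :: complex assumes q: "norm q < 1"
  shows "qinf (q^2) (q^2) = qinf q (q^2) * qinf (-q) (q^2) * qinf (q^4) (q^4)"
proof -
  have q2: "norm (q^2) < 1" "norm (q^4) < 1" using q by (auto simp: norm_power power_less_one_iff)
  have pw1: "(q^2)^(2*i) = (q^4)^i" for i
  proof -
    have "(q^2)^(2*i) = q^(2*(2*i))" by (simp add: power_mult)
    also have "\<dots> = q^(4*i)" by (simp add: mult.assoc[symmetric])
    also have "\<dots> = (q^4)^i" by (simp add: power_mult)
    finally show ?thesis .
  qed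
  have pw2: "q^2 * (q^2)^(2*i+1) = q^4 * (q^4)^i" for i
  proof -
    have "q^2 * (q^2)^(2*i+1) = (q^2 * q^2) * (q^2)^(2*i)" by (simp add: power_add mult_ac)
    also have "q^2 * q^2 = q^4" by (simp add: power_add[symmetric])
    finally show ?thesis by (simp add: pw1)
  qed
  have f1: "(\<lambda>i. 1 - q^2 * (q^2)^(2*i)) = (\<lambda>i. 1 - q^2 * (q^4)^i)" by (simp add: pw1)
  have f2: "(\<lambda>i. 1 - q^2 * (q^2)^(2*i+1)) = (\<lambda>i. 1 - q^4 * (q^4)^i)" by (simp only: pw2)
  have "qinf (q^2) (q^2) = prodinf (\<lambda>i. 1 - q^2 * (q^2)^(2*i)) * prodinf (\<lambda>i. 1 - q^2 * (q^2)^(2*i+1))"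
    unfolding qinf_def
  proof (rule evenodd_prod)
    show "convergent_prod (\<lambda>j. 1 - q\<^sup>2 * (q\<^sup>2) ^ j)" by (rule qinf_conv[OF q2(1)])
    show "convergent_prod (\<lambda>i. 1 - q\<^sup>2 * (q\<^sup>2) ^ (2 * i))"
      unfolding f1 by (rule qinf_conv[OF q2(2)])
    show "convergent_prod (\<lambda>i. 1 - q\<^sup>2 * (q\<^sup>2) ^ (2 * i + 1))"
      unfolding f2 by (rule qinf_conv[OF q2(2)])
  qed
  also have "prodinf (\<lambda>i. 1 - q^2 * (q^2)^(2*i)) = qinf (q^2) (q^4)"
    unfolding qinf_def f1 ..
  also have "prodinf (\<lambda>i. 1 - q^2 * (q^2)^(2*i+1)) = qinf (q^4) (q^4)"
    unfolding qinf_def f2 ..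
  also have "qinf (q^2) (q^4) = qinf q (q^2) * qinf (-q) (q^2)"
  proof -
    have q1: "norm (q^2) < 1" by (rule q2(1))
    have "qinf q (q^2) * qinf (-q) (q^2) = (\<Prod>j. (1 - q * (q^2)^j) * (1 - (-q) * (q^2)^j))"
      unfolding qinf_def by (rule prodinf_mult[OF qinf_conv[OF q1] qinf_conv[OF q1]])
    also have "(\<lambda>j. (1 - q * (q^2)^j) * (1 - (-q) * (q^2)^j)) = (\<lambda>j. 1 - q^2 * (q^4)^j)"
    proof (rule ext)
      fix j
      have h: "q^2 * q^2 = q^4" by (simp add: power_add[symmetric])
      have "(q^4)^j = (q^2)^j * (q^2)^j"
        by (metis h power_mult_distrib)
      thus "(1 - q * (q^2)^j) * (1 - (-q) * (q^2)^j) = 1 - q^2 * (q^4)^j"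
        by (simp add: algebra_simps power2_eq_square)
    qed
    finally show ?thesis by (simp add: qinf_def)
  qed
  finally show ?thesis by (simp add: mult_ac)
qed

lemma nu_bilateral:
  fixes q :: complex assumes q: "norm q < 1" "q \<noteq> 0"
  shows "((\<lambda>n::int. q powi (n^2 + n) / qpochZ (-q) (q^2) (n + 1)) has_sum
          (2 * qinf (-(q^2)) (q^2) * qinf (-(q^2)) (q^2) * qinf (q^4) (q^4))) UNIV"
proof -
  have p: "norm (q^2) < 1" "q^2 \<noteq> 0" using q by (auto simp: norm_power power_less_one_iff)
  have bz: "qinf (-q) (q^2) \<noteq> 0" using p q by (intro qinf_nz_small) auto
  have qz: "qinf q (q^2) \<noteq> 0" using p q by (intro qinf_nz_small) auto
  have H: "((\<lambda>n. tt (q^2) (-1) n / qpochZ (-q) (q^2) n) has_sum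
      (qinf (q^2) (q^2) * qinf (-1) (q^2) * qinf (-(q^2)) (q^2) / (qinf (-q) (q^2) * qinf q (q^2)))) UNIV"
    using M[OF p, of "-1" "-q"] q bz p by simp
  have v: "qinf (q^2) (q^2) * qinf (-1) (q^2) * qinf (-(q^2)) (q^2) / (qinf (-q) (q^2) * qinf q (q^2))
         = 2 * qinf (-(q^2)) (q^2) * qinf (-(q^2)) (q^2) * qinf (q^4) (q^4)"
  proof -
    have "qinf (-1) (q^2) = 2 * qinf (-(q^2)) (q^2)" using qinf_Suc[OF p(1), of "-1"] by simp
    thus ?thesis unfolding qinf_sq_split[OF q(1)] using bz qz by (simp add: field_simps)
  qed
  have tt: "tt (q^2) (-1) n = q powi (n * (n - 1))" for n
  proof -
    have "tt (q^2) (-1) n = ((-1) * (-1)) powi n * q powi (n * (n - 1))"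
      unfolding tt_sq[OF q(2)] by (simp add: power_int_mult_distrib mult_ac)
    thus ?thesis by simp
  qed
  have H2: "((\<lambda>n. q powi (n * (n - 1)) / qpochZ (-q) (q^2) n) has_sum
          (2 * qinf (-(q^2)) (q^2) * qinf (-(q^2)) (q^2) * qinf (q^4) (q^4))) UNIV"
    using H unfolding tt v .
  have bij: "bij_betw (\<lambda>n::int. n + 1) UNIV UNIV"
    by (rule bij_betwI[where g = "\<lambda>n. n - 1"]) auto
  have "((\<lambda>n. q powi ((n + 1) * n) / qpochZ (-q) (q^2) (n + 1)) has_sum
          (2 * qinf (-(q^2)) (q^2) * qinf (-(q^2)) (q^2) * qinf (q^4) (q^4))) UNIV"
    using has_sum_reindex_bij_betw[OF bij, of "\<lambda>n. q powi (n * (n - 1)) / qpochZ (-q) (q^2) n"] H2 by simp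
  moreover have "(n + 1) * n = n^2 + n" for n :: int by (simp add: power2_eq_square algebra_simps)
  ultimately show ?thesis by simp
qed

lemma conj34:
  fixes q :: complex assumes q: "norm q < 1" "q \<noteq> 0"
  shows "(\<lambda>r. qpoch (-q) (q^2) r * q ^ r) sums
        (2 * qinf (-(q^2)) (q^2) * qinf (-(q^2)) (q^2) * qinf (q^4) (q^4) - mock_nu q)"
proof -
  obtain A B where A: "(\<lambda>n. q powi ((int n)^2 + int n) / qpochZ (-q) (q^2) (int n + 1)) sums A"
    and B: "(\<lambda>m. q powi ((- int (Suc m))^2 + (- int (Suc m))) / qpochZ (-q) (q^2) (- int (Suc m) + 1)) sums B"
    and AB: "2 * qinf (-(q^2)) (q^2) * qinf (-(q^2)) (q^2) * qinf (q^4) (q^4) = A + B"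
    using int_has_sum_split[OF nu_bilateral[OF q]] by blast
  have "q powi ((int n)^2 + int n) / qpochZ (-q) (q^2) (int n + 1) = q ^ (n^2 + n) / qpoch (-q) (q^2) (Suc n)" for n
  proof -
    have "(int n)^2 + int n = int (n^2 + n)" by simp
    moreover have "int n + 1 = int (Suc n)" by simp
    ultimately show ?thesis by (simp only: power_int_of_nat qpochZ_nat)
  qed
  hence "(\<lambda>n. q ^ (n^2 + n) / qpoch (-q) (q^2) (Suc n)) sums A" using A by simp
  hence "mock_nu q = A" unfolding mock_nu_def by (rule sums_unique[symmetric])
  moreover have "q powi ((- int (Suc m))^2 + (- int (Suc m))) / qpochZ (-q) (q^2) (- int (Suc m) + 1) = qpoch (-q) (q^2) m * q ^ m" for m
  proof -
    have e1: "(- int (Suc m))^2 + (- int (Suc m)) = int (m * m + m)" by (simp add: power2_eq_square algebra_simps)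
    have e2: "- int (Suc m) + 1 = - int m" by simp
    have a: "-q \<noteq> 0" using q(2) by simp
    have i: "1 / qpochZ (-q) (q^2) (- int m) = q ^ m * qpoch (-q) (q^2) m / q ^ (m * m + m)"
    proof -
      have "q^2 / (-q) = -q" using q(2) by (simp add: power2_eq_square)
      thus ?thesis using inv_qpochZ_neg[OF q(2) a, of m] by simp
    qed
    have "q powi ((- int (Suc m))^2 + (- int (Suc m))) / qpochZ (-q) (q^2) (- int (Suc m) + 1)
        = q ^ (m * m + m) * (1 / qpochZ (-q) (q^2) (- int m))"
      unfolding e1 e2 power_int_of_nat by simp
    also have "\<dots> = qpoch (-q) (q^2) m * q ^ m" unfolding i using q(2) by simp
    finally show ?thesis .
  qed
  ultimately show ?thesis using B AB by simp
qed




lemma psi_facts: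
  fixes q :: complex assumes q: "norm q < 1" "q \<noteq> 0"
  defines "c \<equiv> (\<lambda>n. qpoch q (q^2) n)"
  shows psi_I1: "c (Suc n) = c n * (1 - q ^ Suc (2 * n))"
    and psi_I2: "c n \<noteq> 0"
    and psi_I2': "1 - q ^ Suc (2 * n) \<noteq> 0"
proof -
  show "c (Suc n) = c n * (1 - q ^ Suc (2 * n))"
    unfolding c_def qpoch_Suc by (simp add: power_mult)
  show "c n \<noteq> 0" unfolding c_def
    by (rule qpoch_nz, rule small_ne_1) (use q in \<open>auto simp: norm_power power_le_one\<close>)
  have "1 * q ^ Suc (2 * n) \<noteq> 1" by (rule pow_ne_1) (use q in auto)
  thus "1 - q ^ Suc (2 * n) \<noteq> 0" by simp
qed

lemma psi_a_summable:
  fixes q :: complex assumes q: "norm q < 1" "q \<noteq> 0"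
  shows "summable (\<lambda>n. q ^ (n^2) / qpoch q (q^2) n)"
proof -
  define c where "c = (\<lambda>n. qpoch q (q^2) n)"
  have I1: "c (Suc n) = c n * (1 - q ^ Suc (2 * n))" for n unfolding c_def by (rule psi_I1[OF q])
  have I2: "c n \<noteq> 0" for n unfolding c_def by (rule psi_I2[OF q])
  have I2': "1 - q ^ Suc (2 * n) \<noteq> 0" for n by (rule psi_I2'[OF q])
  have "summable (\<lambda>n. norm (q ^ (n^2) / c n))"
  proof (rule ratio_summable)
    fix n
    have e: "q ^ (Suc n ^ 2) = q ^ (n^2) * q ^ Suc (2 * n)"
    proof -
      have "Suc n ^ 2 = n^2 + Suc (2 * n)" by (simp add: power2_eq_square)
      thus ?thesis by (simp add: power_add)
    qed
    have "norm (q ^ (Suc n ^ 2) / c (Suc n)) = norm (q ^ (n^2) / c n) * (norm q ^ Suc (2 * n) / norm (1 - q ^ Suc (2 * n)))"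
      unfolding e I1 by (simp add: norm_mult norm_divide norm_power)
    also have "\<dots> \<le> norm (q ^ (n^2) / c n) * (norm q ^ Suc (2 * n) / (1 - norm q))"
    proof (rule mult_left_mono)
      show "norm q ^ Suc (2 * n) / norm (1 - q ^ Suc (2 * n)) \<le> norm q ^ Suc (2 * n) / (1 - norm q)"
      proof (rule divide_left_mono)
        show "norm (1 - q ^ Suc (2 * n)) \<ge> 1 - norm q" using norm_1_minus_pow[OF q(1), of "2 * n"] by linarith
        show "0 < norm (1 - q ^ Suc (2 * n)) * (1 - norm q)" using norm_1_minus_pow[OF q(1), of "2 * n"] q(1)
          by (intro mult_pos_pos) linarith+
      qed simp
    qed simp
    finally show "norm (q ^ (Suc n ^ 2) / c (Suc n)) \<le> (norm q ^ Suc (2 * n) / (1 - norm q)) * norm (q ^ (n^2) / c n)"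
      by (simp add: mult_ac)
  next
    have "(\<lambda>n. norm q * (norm q ^ 2) ^ n / (1 - norm q)) \<longlonglongrightarrow> norm q * 0 / (1 - norm q)"
      using q by (intro tendsto_intros LIMSEQ_power_zero) (auto simp: power_less_one_iff)
    moreover have "norm q * (norm q ^ 2) ^ n = norm q ^ Suc (2 * n)" for n by (simp add: power_mult)
    ultimately show "(\<lambda>n. norm q ^ Suc (2 * n) / (1 - norm q)) \<longlonglongrightarrow> 0" by simp
  qed simp
  thus ?thesis unfolding c_def by (rule summable_norm_cancel)
qed

lemma psi_main:
  fixes q :: complex assumes q: "norm q < 1" "q \<noteq> 0"
  defines "P \<equiv> qinf (-q) (q^2) * qinf (-q) (q^2) * qinf (q^2) (q^2) / (qinf q (q^2) * qinf (-(q^2)) (q^2))"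
  shows "\<exists>A L. (\<lambda>n. q ^ (n^2) / qpoch q (q^2) n) sums A
      \<and> (\<lambda>N. (\<Sum>k\<le>N. qpoch q (q^2) k * (-1) ^ k) + (\<Sum>k\<le>Suc N. qpoch q (q^2) k * (-1) ^ k)) \<longlonglongrightarrow> L
      \<and> L = P - 2 * A + 2"
proof -
  define c where "c = (\<lambda>n. qpoch q (q^2) n)"
  define a where "a = (\<lambda>n. q ^ (n^2) / c n)"
  define d where "d = (\<lambda>n. c n * (-1) ^ n)"
  define S where "S = (\<lambda>n. \<Sum>k\<le>n. d k)"
  have I1: "c (Suc n) = c n * (1 - q ^ Suc (2 * n))" for n unfolding c_def by (rule psi_I1[OF q])
  have I2: "c n \<noteq> 0" for n unfolding c_def by (rule psi_I2[OF q])
  have I2': "1 - q ^ Suc (2 * n) \<noteq> 0" for n by (rule psi_I2'[OF q])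
  have p: "norm (q^2) < 1" "q^2 \<noteq> 0" using q by (auto simp: norm_power power_less_one_iff)
  define x where "x = - 1 / q"
  have x: "x \<noteq> 0" using q by (simp add: x_def)
  have bx: "q / x = - (q^2)" "q^2 / x = - (q^3)" using q(2) by (simp_all add: x_def power2_eq_square power3_eq_cube)
  have bz: "qinf q (q^2) \<noteq> 0" using p q by (intro qinf_nz_small) auto
  have bz2: "qinf (-(q^2)) (q^2) \<noteq> 0" using p by (intro qinf_nz_small) auto
  have n3: "norm (-(q^3)) < 1" using q by (simp add: norm_power power_less_one_iff)
  define W where "W = qinf (q^2) (q^2) * qinf x (q^2) * qinf (-(q^3)) (q^2) / (qinf q (q^2) * qinf (-(q^2)) (q^2))"
  define w where "w = (\<lambda>n. tt (q^2) x n / qpochZ q (q^2) n)"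
  have H: "(w has_sum W) UNIV"
    using M[OF p x, of q] bx p n3 bz unfolding W_def w_def by simp
  have qW: "q * W = P"
  proof -
    have "qinf x (q^2) = (1 + 1 / q) * qinf (-q) (q^2)"
      using qinf_Suc[OF p(1), of x] q(2) by (simp add: x_def power2_eq_square)
    moreover have "qinf (-q) (q^2) = (1 + q) * qinf (-(q^3)) (q^2)"
      using qinf_Suc[OF p(1), of "-q"] by (simp add: power2_eq_square power3_eq_cube mult.assoc)
    ultimately have "q * qinf x (q^2) * qinf (-(q^3)) (q^2) = qinf (-q) (q^2) * qinf (-q) (q^2)"
      using q(2) by (simp add: field_simps)
    thus ?thesis unfolding W_def P_def using bz bz2
      by (simp add: field_simps)
  qed
  obtain Wp Wn where Wp: "(\<lambda>n. w (int n)) sums Wp" and Wn: "(\<lambda>m. w (- int (Suc m))) sums Wn"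
    and WpWn: "W = Wp + Wn"
    using int_has_sum_split[OF H] by blast
  have w0: "w (int 0) = 1" unfolding w_def by (simp add: tt_def qpochZ_def)
  have I5: "q * w (int (Suc n)) = q ^ (n * n) / c (Suc n)" for n
  proof -
    have e1: "(-1) ^ Suc n * x ^ Suc n = (1 / q) ^ Suc n"
      unfolding x_def by (simp add: power_mult_distrib[symmetric])
    have e2: "(q^2) ^ tri (Suc n) = q ^ (n * n) * q ^ n"
    proof -
      have "(q^2) ^ tri (Suc n) = q ^ (2 * tri (Suc n))" by (simp add: power_mult)
      also have "2 * tri (Suc n) = n * n + n" by (simp add: tri2)
      finally show ?thesis by (simp add: power_add)
    qed
    have "q * w (int (Suc n)) = q * ((-1) ^ Suc n * x ^ Suc n) * (q^2) ^ tri (Suc n) / c (Suc n)"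
      unfolding w_def tt_nat qpochZ_nat c_def by (simp add: mult_ac)
    also have "\<dots> = q ^ (n * n) / c (Suc n)"
      unfolding e1 e2 using q(2) by (simp add: field_simps)
    finally show ?thesis .
  qed
  have I4: "a (Suc n) + a n = q ^ (n * n) / c (Suc n)" for n
  proof -
    have e: "q ^ (Suc n ^ 2) = q ^ (n^2) * q ^ Suc (2 * n)"
    proof -
      have "Suc n ^ 2 = n^2 + Suc (2 * n)" by (simp add: power2_eq_square)
      thus ?thesis by (simp add: power_add)
    qed
    show ?thesis unfolding a_def e I1 using I2[of n] I2'[of n]
      by (simp add: field_simps power2_eq_square)
  qed
  have "(\<lambda>n. q * w (int n)) sums (q * Wp)" by (rule sums_mult[OF Wp])
  hence "(\<lambda>n. q * w (int (Suc n))) sums (q * Wp - q)"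
    using w0 by (subst sums_Suc_iff) simp
  hence pos1: "(\<lambda>n. a (Suc n) + a n) sums (q * Wp - q)" by (simp only: I4 I5)
  have as: "summable a" unfolding a_def c_def by (rule psi_a_summable[OF q])
  define A where "A = suminf a"
  have aA: "a sums A" using as A_def by (simp add: summable_sums)
  have "(\<lambda>n. a (Suc n)) sums (A - 1)" using aA by (subst sums_Suc_iff) (simp add: a_def c_def)
  hence "(\<lambda>n. a (Suc n) + a n) sums (A - 1 + A)" by (intro sums_add aA)
  hence posv: "q * Wp - q = 2 * A - 1" using pos1 sums_unique2 by fastforce
  have I6: "w (- int (Suc m)) = (-(q^2)) ^ Suc m * c (Suc m)" for m
  proof -
    define K where "K = Suc m"
    have i: "1 / qpochZ q (q^2) (- int K) = (-q) ^ K * c K / q ^ (K * K + K)"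
      using inv_qpochZ_neg[OF q(2) q(2), of K] q(2) by (simp add: c_def power2_eq_square)
    have e2: "(q^2) ^ tri (Suc K) = q ^ (K * K + K)"
    proof -
      have "(q^2) ^ tri (Suc K) = q ^ (2 * tri (Suc K))" by (simp add: power_mult)
      also have "2 * tri (Suc K) = K * K + K" by (simp add: tri2)
      finally show ?thesis .
    qed
    have "w (- int K) = (-1) ^ K * (q^2) ^ tri (Suc K) * (1 / x) ^ K * (1 / qpochZ q (q^2) (- int K))"
      unfolding w_def K_def tt_neg by simp
    also have "\<dots> = ((-1) * (1 / x) * (-q)) ^ K * c K"
    proof -
      have f: "(-1::complex) ^ K * (-q) ^ K = q ^ K" by (simp add: power_mult_distrib[symmetric])
      show ?thesis unfolding i e2 using q(2) f by (simp add: field_simps power_mult_distrib)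
    qed
    also have "(-1) * (1 / x) * (-q) = - (q^2)" unfolding x_def using q(2) by (simp add: power2_eq_square)
    finally show ?thesis unfolding K_def .
  qed
  have I7: "q * w (- int (Suc m)) = d (Suc m) + d (Suc (Suc m))" for m
  proof -
    have "d (Suc m) + d (Suc (Suc m)) = (-1) ^ Suc m * c (Suc m) * q ^ Suc (2 * Suc m)"
      unfolding d_def I1[of "Suc m"] by (simp add: algebra_simps)
    also have "\<dots> = q * ((-(q^2)) ^ Suc m * c (Suc m))"
    proof -
      have A: "(-(q^2)) ^ Suc m = (-1) ^ Suc m * (q^2) ^ Suc m" by (simp add: power_mult_distrib[symmetric])
      have B: "q ^ Suc (2 * Suc m) = q * (q^2) ^ Suc m" by (simp only: power_mult power_Suc)
      show ?thesis unfolding A B by (simp only: mult_ac)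
    qed
    finally show ?thesis unfolding I6 by simp
  qed
  have "(\<lambda>m. q * w (- int (Suc m))) sums (q * Wn)" by (rule sums_mult[OF Wn])
  hence negs: "(\<lambda>m. d (Suc m) + d (Suc (Suc m))) sums (q * Wn)" by (simp only: I7)
  have psum: "(\<Sum>m<N. d (Suc m) + d (Suc (Suc m))) = S N + S (Suc N) - 1 - q" for N
  proof (induction N)
    case 0
    have "d 0 = 1" "d 1 = q - 1" unfolding d_def c_def by (simp_all add: qpoch_def)
    thus ?case unfolding S_def by simp
  next
    case (Suc N)
    thus ?case unfolding S_def by simp
  qed
  have "(\<lambda>N. S N + S (Suc N) - 1 - q) \<longlonglongrightarrow> q * Wn"
    using negs unfolding sums_def psum .
  hence "(\<lambda>N. S N + S (Suc N) - 1 - q + (1 + q)) \<longlonglongrightarrow> q * Wn + (1 + q)"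
    by (intro tendsto_intros)
  hence lim: "(\<lambda>N. S N + S (Suc N)) \<longlonglongrightarrow> q * Wn + 1 + q" by (simp add: add.assoc)
  have "q * Wn + 1 + q = P - 2 * A + 2"
  proof -
    have e1: "P = q * Wn + q * Wp" using qW WpWn by (simp add: distrib_left add.commute)
    have e2: "2 * A = q * Wp - q + 1" using posv by simp
    have "q * Wn + 1 + q = (q * Wn + q * Wp) - (q * Wp - q + 1) + 2" by (simp add: algebra_simps)
    thus ?thesis unfolding e1 e2 .
  qed
  moreover have "(\<lambda>n. q ^ (n^2) / qpoch q (q^2) n) sums A" using aA unfolding a_def c_def .
  ultimately show ?thesis using lim unfolding S_def d_def c_def by blast
qed

lemma psi_I8:
  fixes q :: complex assumes q: "q \<noteq> 0"
  shows "q powi ((- int M)^2) / qpochZ q (q^2) (- int M) = qpoch q (q^2) M * (-1) ^ M"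
proof -
  have i: "1 / qpochZ q (q^2) (- int M) = (-q) ^ M * qpoch q (q^2) M / q ^ (M * M + M)"
    using inv_qpochZ_neg[OF q q, of M] q by (simp add: power2_eq_square)
  have "q powi ((- int M)^2) / qpochZ q (q^2) (- int M) = q ^ (M * M) * (1 / qpochZ q (q^2) (- int M))"
    unfolding nsq_pow by simp
  also have "\<dots> = q ^ (M * M) * ((-1) ^ M * q ^ M) * qpoch q (q^2) M / (q ^ (M * M) * q ^ M)"
    unfolding i by (simp add: power_add power_mult_distrib[symmetric])
  also have "\<dots> = qpoch q (q^2) M * (-1) ^ M" using q by (simp add: field_simps)
  finally show ?thesis .
qed

lemma conj56:
  fixes q :: complex assumes q: "norm q < 1" "q \<noteq> 0"
  shows "cesaro_sums (\<lambda>r. qpoch q (q^2) r * (-1) ^ r)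
        (qinf (-q) (q^2) * qinf (-q) (q^2) * qinf (q^2) (q^2)
           / (2 * (qinf q (q^2) * qinf (-(q^2)) (q^2))) - mock_psi q)
     \<and> (\<exists>A B. (\<lambda>n. q powi ((int n)^2) / qpochZ q (q^2) (int n)) sums A
           \<and> cesaro_sums (\<lambda>m. q powi ((- int (Suc m))^2) / qpochZ q (q^2) (- int (Suc m))) B
           \<and> A + B = qinf (-q) (q^2) * qinf (-q) (q^2) * qinf (q^2) (q^2)
                      / (2 * (qinf q (q^2) * qinf (-(q^2)) (q^2))))"
proof -
  define P where "P = qinf (-q) (q^2) * qinf (-q) (q^2) * qinf (q^2) (q^2) / (qinf q (q^2) * qinf (-(q^2)) (q^2))"
  have P2: "qinf (-q) (q^2) * qinf (-q) (q^2) * qinf (q^2) (q^2) / (2 * (qinf q (q^2) * qinf (-(q^2)) (q^2))) = P / 2"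
    unfolding P_def by simp
  obtain A L where aA: "(\<lambda>n. q ^ (n^2) / qpoch q (q^2) n) sums A"
    and lim: "(\<lambda>N. (\<Sum>k\<le>N. qpoch q (q^2) k * (-1) ^ k) + (\<Sum>k\<le>Suc N. qpoch q (q^2) k * (-1) ^ k)) \<longlonglongrightarrow> L"
    and LA: "L = P - 2 * A + 2"
    using psi_main[OF q] unfolding P_def by blast
  define d where "d = (\<lambda>k. qpoch q (q^2) k * (-1) ^ k)"
  define S where "S = (\<lambda>n. \<Sum>k\<le>n. d k)"
  have p: "norm (q^2) < 1" using q by (auto simp: norm_power power_less_one_iff)
  have "convergent (\<lambda>n. qpoch q (q^2) n)" using qpoch_tendsto[OF p] by (rule convergentI)
  hence "Bseq (\<lambda>n. qpoch q (q^2) n)" by (rule convergent_imp_Bseq)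
  then obtain K where K: "\<And>n. norm (qpoch q (q^2) n) \<le> K" by (auto simp: Bseq_def)
  have bd: "Bseq (\<lambda>n. S (Suc n) - S n)"
    by (rule BseqI'[where K = K]) (simp add: S_def d_def norm_mult norm_power K)
  have bd2: "Bseq (\<lambda>n. (S (Suc (Suc n)) - 1) - (S (Suc n) - 1))"
    by (rule BseqI'[where K = K]) (simp add: S_def d_def norm_mult norm_power K)
  have limS: "(\<lambda>n. S n + S (Suc n)) \<longlonglongrightarrow> L" using lim unfolding S_def d_def .
  have mp: "mock_psi q = A - 1"
  proof -
    have "(\<lambda>n. q ^ (Suc n ^ 2) / qpoch q (q^2) (Suc n)) sums (A - 1)"
      using aA by (subst sums_Suc_iff) (simp add: qpoch_def)
    thus ?thesis unfolding mock_psi_def by (rule sums_unique[symmetric])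
  qed
  have c1: "(\<lambda>N. (\<Sum>n\<le>N. S n) / of_nat (Suc N)) \<longlonglongrightarrow> L / 2" by (rule cesaro_pair[OF limS bd])
  have "cesaro_sums d (P / 2 - mock_psi q)"
    unfolding cesaro_sums_def using c1 unfolding S_def LA mp by (simp add: field_simps)
  hence C5: "cesaro_sums (\<lambda>r. qpoch q (q^2) r * (-1) ^ r) (P / 2 - mock_psi q)" unfolding d_def .
  define g where "g = (\<lambda>m. q powi ((- int (Suc m))^2) / qpochZ q (q^2) (- int (Suc m)))"
  have gd: "g m = d (Suc m)" for m unfolding g_def d_def by (rule psi_I8[OF q(2)])
  have gs: "(\<Sum>k\<le>n. g k) = S (Suc n) - 1" for n
  proof -
    have "S (Suc n) = d 0 + (\<Sum>k\<le>n. d (Suc k))" unfolding S_def by (rule sum.atMost_Suc_shift)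
    moreover have "d 0 = 1" by (simp add: d_def qpoch_def)
    ultimately show ?thesis by (simp add: gd)
  qed
  have limS2: "(\<lambda>n. (S (Suc n) - 1) + (S (Suc (Suc n)) - 1)) \<longlonglongrightarrow> L - 2"
  proof -
    have "(\<lambda>n. S (Suc n) + S (Suc (Suc n)) - 2) \<longlonglongrightarrow> L - 2"
      by (intro tendsto_intros LIMSEQ_Suc[OF limS])
    thus ?thesis by (simp add: algebra_simps)
  qed
  have c2: "(\<lambda>N. (\<Sum>n\<le>N. S (Suc n) - 1) / of_nat (Suc N)) \<longlonglongrightarrow> (L - 2) / 2"
    by (rule cesaro_pair[OF limS2 bd2])
  have C6: "cesaro_sums g (P / 2 - A)"
    unfolding cesaro_sums_def gs using c2 unfolding LA by (simp add: field_simps)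
  have A6: "(\<lambda>n. q powi ((int n)^2) / qpochZ q (q^2) (int n)) sums A"
    using aA by (simp add: pos_sq_pow qpochZ_nat)
  show ?thesis unfolding P2 using C5 C6 A6 unfolding g_def by (intro conjI exI[of _ A] exI[of _ "P / 2 - A"]) auto
qed

lemma qinf_0 [simp]: "qinf 0 b = 1" by (simp add: qinf_def)
lemma qpoch_0a [simp]: "qpoch 0 b n = 1" by (simp add: qpoch_def)

lemma zero_case:
  shows "(\<lambda>r. qpoch (-1) ((0::complex)^2) (Suc r) * 0 ^ (Suc r)) sums
        (qinf (-0) (0^2) * qinf (-0) (0^2) * qinf (0^2) (0^2) / (qinf 0 (0^2) * qinf (-(0^2)) (0^2)) - mock_phi 0)"
    and "(\<lambda>r. qpoch (-0) ((0::complex)^2) r * 0 ^ r) sums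
        (2 * qinf (-(0^2)) (0^2) * qinf (-(0^2)) (0^2) * qinf (0^4) (0^4) - mock_nu 0)"
    and "cesaro_sums (\<lambda>r. qpoch 0 ((0::complex)^2) r * (-1) ^ r)
        (qinf (-0) (0^2) * qinf (-0) (0^2) * qinf (0^2) (0^2) / (2 * (qinf 0 (0^2) * qinf (-(0^2)) (0^2))) - mock_psi 0)"
proof -
  have ph: "mock_phi 0 = 1"
  proof -
    have "(\<lambda>n. (0::complex) ^ (n^2) / qpoch (- (0^2)) (0^2) n) = (\<lambda>n. if n = 0 then 1 else 0)"
      by (rule ext) simp
    moreover have "(\<lambda>n::nat. if n = 0 then (1::complex) else 0) sums 1"
      using sums_single[of 0 "\<lambda>_. 1::complex"] by simp
    ultimately show ?thesis unfolding mock_phi_def by (simp add: sums_iff)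
  qed
  show "(\<lambda>r. qpoch (-1) ((0::complex)^2) (Suc r) * 0 ^ (Suc r)) sums
        (qinf (-0) (0^2) * qinf (-0) (0^2) * qinf (0^2) (0^2) / (qinf 0 (0^2) * qinf (-(0^2)) (0^2)) - mock_phi 0)"
    by (simp add: ph)
  have nu: "mock_nu 0 = 1"
  proof -
    have "(\<lambda>n. (0::complex) ^ (n^2 + n) / qpoch (- 0) (0^2) (Suc n)) = (\<lambda>n. if n = 0 then 1 else 0)"
      by (rule ext) simp
    moreover have "(\<lambda>n::nat. if n = 0 then (1::complex) else 0) sums 1"
      using sums_single[of 0 "\<lambda>_. 1::complex"] by simp
    ultimately show ?thesis unfolding mock_nu_def by (simp add: sums_iff)
  qed
  have "(\<lambda>r. qpoch (-0) ((0::complex)^2) r * 0 ^ r) = (\<lambda>n. if n = 0 then 1 else 0)"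
    by (rule ext) simp
  moreover have "(\<lambda>n::nat. if n = 0 then (1::complex) else 0) sums 1"
    using sums_single[of 0 "\<lambda>_. 1::complex"] by simp
  ultimately show "(\<lambda>r. qpoch (-0) ((0::complex)^2) r * 0 ^ r) sums
        (2 * qinf (-(0^2)) (0^2) * qinf (-(0^2)) (0^2) * qinf (0^4) (0^4) - mock_nu 0)"
    by (simp add: nu)
  have ps: "mock_psi 0 = 0"
  proof -
    have "(\<lambda>n. (0::complex) ^ (Suc n ^ 2) / qpoch 0 (0^2) (Suc n)) = (\<lambda>n. 0)"
      by (rule ext) (simp add: power2_eq_square)
    thus ?thesis unfolding mock_psi_def by simp
  qed
  define U where "U = (\<lambda>n. \<Sum>k\<le>n. (-1::complex) ^ k)"
  have Uc: "U n = (1 + (-1) ^ n) / 2" for n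
    unfolding U_def by (induction n) (simp_all add: field_simps)
  have "U n + U (Suc n) = 1" for n unfolding Uc by (simp add: field_simps)
  hence "(\<lambda>n. U n + U (Suc n)) \<longlonglongrightarrow> 1" by simp
  moreover have "Bseq (\<lambda>n. U (Suc n) - U n)"
    by (rule BseqI'[where K = 1]) (simp add: U_def norm_power)
  ultimately have "(\<lambda>N. (\<Sum>n\<le>N. U n) / of_nat (Suc N)) \<longlonglongrightarrow> 1 / 2" by (rule cesaro_pair)
  thus "cesaro_sums (\<lambda>r. qpoch 0 ((0::complex)^2) r * (-1) ^ r)
        (qinf (-0) (0^2) * qinf (-0) (0^2) * qinf (0^2) (0^2) / (2 * (qinf 0 (0^2) * qinf (-(0^2)) (0^2))) - mock_psi 0)"
    unfolding cesaro_sums_def ps U_def by simp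
qed

theorem mainTheorem4:
  fixes q :: complex
  assumes "norm q < 1"
  shows
    "((\<lambda>r. qpoch (-1) (q^2) (Suc r) * q ^ (Suc r)) sums
        (qinf (-q) (q^2) * qinf (-q) (q^2) * qinf (q^2) (q^2)
           / (qinf q (q^2) * qinf (-(q^2)) (q^2)) - mock_phi q))
     \<and> (q \<noteq> 0 \<longrightarrow>
        ((\<lambda>n::int. q powi (n^2) / qpochZ (-(q^2)) (q^2) n) has_sum
          (qinf (-q) (q^2) * qinf (-q) (q^2) * qinf (q^2) (q^2)
             / (qinf q (q^2) * qinf (-(q^2)) (q^2)))) UNIV)
     \<and> ((\<lambda>r. qpoch (-q) (q^2) r * q ^ r) sums
        (2 * qinf (-(q^2)) (q^2) * qinf (-(q^2)) (q^2) * qinf (q^4) (q^4) - mock_nu q))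
     \<and> (q \<noteq> 0 \<longrightarrow>
        ((\<lambda>n::int. q powi (n^2 + n) / qpochZ (-q) (q^2) (n + 1)) has_sum
          (2 * qinf (-(q^2)) (q^2) * qinf (-(q^2)) (q^2) * qinf (q^4) (q^4))) UNIV)
     \<and> cesaro_sums (\<lambda>r. qpoch q (q^2) r * (-1) ^ r)
        (qinf (-q) (q^2) * qinf (-q) (q^2) * qinf (q^2) (q^2)
           / (2 * (qinf q (q^2) * qinf (-(q^2)) (q^2))) - mock_psi q)
     \<and> (q \<noteq> 0 \<longrightarrow>
        (\<exists>A B. (\<lambda>n. q powi ((int n)^2) / qpochZ q (q^2) (int n)) sums A
           \<and> cesaro_sums (\<lambda>m. q powi ((- int (Suc m))^2) / qpochZ q (q^2) (- int (Suc m))) B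
           \<and> A + B = qinf (-q) (q^2) * qinf (-q) (q^2) * qinf (q^2) (q^2)
                      / (2 * (qinf q (q^2) * qinf (-(q^2)) (q^2)))))"
proof (cases "q = 0")
  case True
  thus ?thesis using zero_case by simp
next
  case False
  note q = assms False
  show ?thesis
    using conj12[OF q] phi_bilateral[OF q] conj34[OF q] nu_bilateral[OF q] conj56[OF q] by blast
qed


end
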